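(* Let $0<\gamma\le 1/2$, let $(x,z)$ be an optimal extreme point solution of LP-CVRP-MD with optimum value $\mathrm{opt}_{LP}$, run the sampling procedure described in the context, let $U$ be the set of clients lying on no sampled branching, and let $F$ be a minimum-cost spanning forest of the complete graph on $C\cup R$ (edge costs $c$) in which each connected component contains exactly one vertex of $R\cup(C\setminus U)$. Then $\mathbb E[c(F)]\le e^{-\gamma}\,\mathrm{opt}_{LP}$.
   Context: Problem: nonempty disjoint finite sets $C$ (clients) and $R$ (depots), $V = C\cup R$, a metric $c$ on $V$, integer capacity $k \ge 3$; $c(v,R):=\min_{r\in R}c(v,r)>0$ for every client $v$. Work in the complete bidirected graph on $V$ (directed edges $(a,b)$ of cost $c(a,b)$); for a vector $y$ on directed edges and $S\subseteq V$, $y(\delta^{in}(S))$, $y(\delta^{out}(S))$ are sums over edges entering/leaving $S$. LP-CVRP-MD has variables $x^r_{v,e}\ge 0$ ($r\in R$, $v\in C$, $e$ a directed edge) and $z^r_{v,u}\ge0$ ($r\in R$, $v\in C$, $u\in V$), objective: minimize $\sum_{r,v,e} c(e)x^r_{v,e}$, constraints: (1) $x^r_v(\delta^{out}(u))$ is $2z^r_{v,v}$ if $u=r$, $0$ if $u=v$, $z^r_{v,u}$ otherwise; (2) $x^r_v(\delta^{in}(u))$ is $0$ if $u=r$, $2z^r_{v,v}$ if $u=v$, $z^r_{v,u}$ otherwise (for all $r\in R,v\in C,u\in V$); (3) $x^r_v(\delta^{in}(S))\ge z^r_{v,u}$ whenever $u\in S\subseteq V\setminus\{r\}$; (4) $\sum_{r\in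 R}\sum_{v\in C} z^r_{v,u}=1$ for all $u\in C$; (5) $z^r_{v,u}\le z^r_{v,v}$ for $u,v\in C$; (6) $z^r_{v,u}=0$ if $u,v\in C$ and $c(u,r)>c(v,r)$; (7) $\sum_{u\in C}z^r_{v,u}\le k z^r_{v,v}$. An $r$-branching is a tree rooted at $r$ oriented away from $r$. Sampling procedure: for each $r\in R$, $v\in C$, take $r$-branchings $B_1,B_2,\dots$ (finitely many) with weights $\mu_i\ge0$, $\sum_i\mu_i = 2\gamma z^r_{v,v}$, such that every directed edge $e$ lies in branchings of total weight at most $\gamma x^r_{v,e}$, $v$ lies on every $B_i$, and every client $u\neq v$ lies in branchings of total weight at least $\gamma z^r_{v,u}$ (such a decomposition exists by a theorem of Bang-Jensen, Frank and Jackson). Independently include each $B_i$ with probability $\mu_i$. $c(F)$ denotes the total edge cost of $F$. *)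

theory Defs
  imports Complex_Main
begin

definition dedges :: "'a set \<Rightarrow> ('a \<times> 'a) set" where
  "dedges V = {(a, b). a \<in> V \<and> b \<in> V \<and> a \<noteq> b}"

definition delta_in :: "'a set \<Rightarrow> 'a set \<Rightarrow> ('a \<times> 'a) set" where
  "delta_in V S = {(a, b) \<in> dedges V. a \<notin> S \<and> b \<in> S}"

definition delta_out :: "'a set \<Rightarrow> 'a set \<Rightarrow> ('a \<times> 'a) set" where
  "delta_out V S = {(a, b) \<in> dedges V. a \<in> S \<and> b \<notin> S}"

definition metric_on :: "'a set \<Rightarrow> ('a \<Rightarrow> 'a \<Rightarrow> real) \<Rightarrow> bool" where
  "metric_on V c \<longleftrightarrow>
     (\<forall>a\<in>V. c a a = 0) \<and>
     (\<forall>a\<in>V. \<forall>b\<in>V. c a b \<ge> 0 \<and> c a b = c b a) \<and>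
     (\<forall>a\<in>V. \<forall>b\<in>V. \<forall>d\<in>V. c a d \<le> c a b + c b d)"

text \<open>x r v e and z r v u; all variables outside the index domain are fixed to 0,
  so the feasible region is the polyhedron of the LP.\<close>
definition lp_feasible ::
  "'a set \<Rightarrow> 'a set \<Rightarrow> ('a \<Rightarrow> 'a \<Rightarrow> real) \<Rightarrow> nat \<Rightarrow>
   ('a \<Rightarrow> 'a \<Rightarrow> 'a \<times> 'a \<Rightarrow> real) \<Rightarrow> ('a \<Rightarrow> 'a \<Rightarrow> 'a \<Rightarrow> real) \<Rightarrow> bool" where
  "lp_feasible C R c k x z \<longleftrightarrow>
    (let V = C \<union> R in
     (\<forall>r v e. x r v e \<noteq> 0 \<longrightarrow> r \<in> R \<and> v \<in> C \<and> e \<in> dedges V) \<and>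
     (\<forall>r v u. z r v u \<noteq> 0 \<longrightarrow> r \<in> R \<and> v \<in> C \<and> u \<in> V) \<and>
     (\<forall>r v e. x r v e \<ge> 0) \<and>
     (\<forall>r v u. z r v u \<ge> 0) \<and>
     \<comment> \<open>(1)\<close>
     (\<forall>r\<in>R. \<forall>v\<in>C. \<forall>u\<in>V.
        (\<Sum>e\<in>delta_out V {u}. x r v e) =
          (if u = r then 2 * z r v v else if u = v then 0 else z r v u)) \<and>
     \<comment> \<open>(2)\<close>
     (\<forall>r\<in>R. \<forall>v\<in>C. \<forall>u\<in>V.
        (\<Sum>e\<in>delta_in V {u}. x r v e) =
          (if u = r then 0 else if u = v then 2 * z r v v else z r v u)) \<and>
     \<comment> \<open>(3)\<close>
     (\<forall>r\<in>R. \<forall>v\<in>C. \<forall>S u. S \<subseteq> V - {r} \<and> u \<in> S \<longrightarrow>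
        (\<Sum>e\<in>delta_in V S. x r v e) \<ge> z r v u) \<and>
     \<comment> \<open>(4)\<close>
     (\<forall>u\<in>C. (\<Sum>r\<in>R. \<Sum>v\<in>C. z r v u) = 1) \<and>
     \<comment> \<open>(5)\<close>
     (\<forall>r\<in>R. \<forall>v\<in>C. \<forall>u\<in>C. z r v u \<le> z r v v) \<and>
     \<comment> \<open>(6)\<close>
     (\<forall>r\<in>R. \<forall>v\<in>C. \<forall>u\<in>C. c u r > c v r \<longrightarrow> z r v u = 0) \<and>
     \<comment> \<open>(7)\<close>
     (\<forall>r\<in>R. \<forall>v\<in>C. (\<Sum>u\<in>C. z r v u) \<le> real k * z r v v))"

definition lp_obj ::
  "'a set \<Rightarrow> 'a set \<Rightarrow> ('a \<Rightarrow> 'a \<Rightarrow> real) \<Rightarrow> ('a \<Rightarrow> 'a \<Rightarrow> 'a \<times> 'a \<Rightarrow> real) \<Rightarrow> real" where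
  "lp_obj C R c x =
     (\<Sum>r\<in>R. \<Sum>v\<in>C. \<Sum>e\<in>dedges (C \<union> R). c (fst e) (snd e) * x r v e)"

definition lp_optimal where
  "lp_optimal C R c k x z \<longleftrightarrow> lp_feasible C R c k x z \<and>
     (\<forall>x' z'. lp_feasible C R c k x' z' \<longrightarrow> lp_obj C R c x \<le> lp_obj C R c x')"

definition lp_extreme where
  "lp_extreme C R c k x z \<longleftrightarrow> lp_feasible C R c k x z \<and>
     (\<forall>x1 z1 x2 z2 (t::real).
        lp_feasible C R c k x1 z1 \<and> lp_feasible C R c k x2 z2 \<and> 0 < t \<and> t < 1 \<and>
        x = (\<lambda>r v e. t * x1 r v e + (1 - t) * x2 r v e) \<and>
        z = (\<lambda>r v u. t * z1 r v u + (1 - t) * z2 r v u)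
        \<longrightarrow> x1 = x2 \<and> z1 = z2)"

definition bverts :: "'a \<Rightarrow> ('a \<times> 'a) set \<Rightarrow> 'a set" where
  "bverts r B = insert r (fst ` B \<union> snd ` B)"

text \<open>An r-branching in the complete bidirected graph on V: a tree rooted at r
  oriented away from r (root has in-degree 0, every other vertex in-degree 1,
  every vertex reachable from r).\<close>
definition is_branching :: "'a set \<Rightarrow> 'a \<Rightarrow> ('a \<times> 'a) set \<Rightarrow> bool" where
  "is_branching V r B \<longleftrightarrow> r \<in> V \<and> B \<subseteq> dedges V \<and>
     (\<forall>a. (a, r) \<notin> B) \<and>
     (\<forall>a1 a2 b. (a1, b) \<in> B \<and> (a2, b) \<in> B \<longrightarrow> a1 = a2) \<and>
     (\<forall>w\<in>bverts r B. (r, w) \<in> B\<^sup>*)"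

definition uedges :: "'a set \<Rightarrow> 'a set set" where
  "uedges V = {{a, b} | a b. a \<in> V \<and> b \<in> V \<and> a \<noteq> b}"

definition uadj :: "'a set set \<Rightarrow> ('a \<times> 'a) set" where
  "uadj F = {(a, b). {a, b} \<in> F}"

definition has_cycle :: "'a set set \<Rightarrow> bool" where
  "has_cycle F \<longleftrightarrow> (\<exists>vs. length vs \<ge> 3 \<and> distinct vs \<and>
      (\<forall>i < length vs. {vs ! i, vs ! ((i + 1) mod length vs)} \<in> F))"

definition is_forest :: "'a set \<Rightarrow> 'a set set \<Rightarrow> bool" where
  "is_forest V F \<longleftrightarrow> F \<subseteq> uedges V \<and> \<not> has_cycle F"

definition ucost :: "('a \<Rightarrow> 'a \<Rightarrow> real) \<Rightarrow> 'a set \<Rightarrow> real" where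
  "ucost c e = (SOME w. \<exists>a b. e = {a, b} \<and> w = c a b)"

definition forest_cost :: "('a \<Rightarrow> 'a \<Rightarrow> real) \<Rightarrow> 'a set set \<Rightarrow> real" where
  "forest_cost c F = (\<Sum>e\<in>F. ucost c e)"

definition terminal_forest :: "'a set \<Rightarrow> 'a set \<Rightarrow> 'a set set \<Rightarrow> bool" where
  "terminal_forest V T F \<longleftrightarrow> is_forest V F \<and>
     (\<forall>w\<in>V. \<exists>!t. t \<in> T \<and> (w, t) \<in> (uadj F)\<^sup>*)"

definition min_tforest_cost :: "'a set \<Rightarrow> 'a set \<Rightarrow> ('a \<Rightarrow> 'a \<Rightarrow> real) \<Rightarrow> real" where
  "min_tforest_cost V T c = Min (forest_cost c ` {F. terminal_forest V T F})"

definition unserved :: "'a set \<Rightarrow> ('i \<Rightarrow> 'a) \<Rightarrow> ('i \<Rightarrow> ('a \<times> 'a) set) \<Rightarrow> 'i set \<Rightarrow> 'a set" where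
  "unserved C rho B J = {u \<in> C. \<forall>i\<in>J. u \<notin> bverts (rho i) (B i)}"

text \<open>Expectation of the minimum forest cost when each index i in I is sampled
  independently with probability mu i.\<close>
definition expected_forest_cost ::
  "'a set \<Rightarrow> 'a set \<Rightarrow> ('a \<Rightarrow> 'a \<Rightarrow> real) \<Rightarrow> 'i set \<Rightarrow> ('i \<Rightarrow> 'a) \<Rightarrow>
   ('i \<Rightarrow> ('a \<times> 'a) set) \<Rightarrow> ('i \<Rightarrow> real) \<Rightarrow> real" where
  "expected_forest_cost C R c I rho B mu =
     (\<Sum>J\<in>Pow I. ((\<Prod>i\<in>J. mu i) * (\<Prod>i\<in>I - J. 1 - mu i)) *
        min_tforest_cost (C \<union> R) (R \<union> (C - unserved C rho B J)) c)"

end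

theory Submission
  imports Defs
begin

definition parf :: "'a set \<Rightarrow> 'a set \<Rightarrow> ('a \<Rightarrow> 'a) \<Rightarrow> ('a \<Rightarrow> nat) \<Rightarrow> bool" where
  "parf V T p h \<longleftrightarrow> (\<forall>u\<in>V-T. p u \<in> V \<and> h (p u) < h u) \<and> (\<forall>t\<in>T. h t = 0)"

lemma func_unique:
  assumes Pfn0: "single_valued P"
  and "(w,t1) \<in> P\<^sup>*" "(w,t2) \<in> P\<^sup>*" "t1 \<notin> Domain P" "t2 \<notin> Domain P"
  shows "t1 = t2"
  using assms(2,3,4,5)
proof -
  have Pfn: "\<And>a b b'. (a,b) \<in> P \<Longrightarrow> (a,b') \<in> P \<Longrightarrow> b = b'" using Pfn0 by (auto simp: single_valued_def)
  show ?thesis using assms(2,3,4,5)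
proof (induction arbitrary: t2 rule: converse_rtrancl_induct)
  case base
  then show ?case by (metis Domain.DomainI converse_rtranclE)
next
  case (step y z)
  from step.prems(1) show ?case
  proof (cases rule: converse_rtranclE)
    case base
    then show ?thesis using step.prems step.hyps by blast
  next
    case (step c)
    then have "c = z" using Pfn \<open>(y,z) \<in> P\<close> by blast
    then show ?thesis using step.IH step.prems step by blast
  qed
qed
qed

lemma parf_forest:
  assumes "finite V" "T \<subseteq> V" "parf V T p h"
  defines "F \<equiv> (\<lambda>u. {u, p u}) ` (V - T)"
  shows "terminal_forest V T F"
proof -
  have pV: "\<And>u. u \<in> V - T \<Longrightarrow> p u \<in> V \<and> h (p u) < h u" using assms(3) unfolding parf_def by blast
  have hT: "\<And>t. t \<in> T \<Longrightarrow> h t = 0" using assms(3) unfolding parf_def by blast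
  have FU: "F \<subseteq> uedges V"
    unfolding F_def uedges_def using pV by fastforce
  have edge: "{a, b} \<in> F \<Longrightarrow> h a < h b \<Longrightarrow> a = p b \<and> b \<in> V - T" for a b
  proof -
    assume "{a,b} \<in> F" "h a < h b"
    then obtain u where u: "u \<in> V - T" "{a,b} = {u, p u}" unfolding F_def by blast
    with pV[OF u(1)] have "a = u \<and> b = p u \<or> a = p u \<and> b = u" by (auto simp: doubleton_eq_iff)
    then show ?thesis using pV[OF u(1)] \<open>h a < h b\<close> u by auto
  qed
  have nocyc: "\<not> has_cycle F"
  proof
    assume "has_cycle F"
    then obtain vs where vs: "length vs \<ge> 3" "distinct vs"
      "\<And>i. i < length vs \<Longrightarrow> {vs ! i, vs ! ((i + 1) mod length vs)} \<in> F"
      unfolding has_cycle_def by blast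
    define n where "n = length vs"
    have "0 \<in> {..<n}" using vs(1) n_def by (simp, metis list.size(3) not_numeral_le_zero)
    then have "finite {..<n}" "{..<n} \<noteq> {}" by auto
    define M where "M = Max ((\<lambda>j. h (vs ! j)) ` {..<n})"
    have "M \<in> (\<lambda>j. h (vs ! j)) ` {..<n}" unfolding M_def using \<open>finite {..<n}\<close> \<open>{..<n} \<noteq> {}\<close> by (intro Max_in) auto
    then obtain i where i1: "i < n" "h (vs ! i) = M" by auto
    have i2: "h (vs ! j) \<le> h (vs ! i)" if "j < n" for j unfolding i1(2) M_def using that by (intro Max_ge) auto
    note i = i1(1) i2
    define j1 where "j1 = (if i + 1 < n then i + 1 else 0)"
    define j0 where "j0 = (if i = 0 then n - 1 else i - 1)"
    have n3: "n \<ge> 3" using vs(1) n_def by simp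
    have j1n: "j1 < n" and j0n: "j0 < n" using i(1) n3 unfolding j1_def j0_def by auto
    have j1s: "(i + 1) mod n = j1"
    proof (cases "i + 1 < n")
      case False then have "i + 1 = n" using i(1) by auto
      then show ?thesis unfolding j1_def by simp
    qed (simp add: j1_def)
    have j0s: "(j0 + 1) mod n = i" using i(1) n3 unfolding j0_def by (cases i) auto
    have "j1 \<noteq> j0" using i(1) n3 unfolding j1_def j0_def by auto
    have e1: "{vs ! i, vs ! j1} \<in> F" using vs(3)[of i] i(1) n_def j1s by simp
    have e0: "{vs ! j0, vs ! i} \<in> F" using vs(3)[of j0] j0n n_def j0s by simp
    have "i \<noteq> j1" using i(1) n3 unfolding j1_def by auto
    then have neq1: "vs ! i \<noteq> vs ! j1" using vs(2) i(1) j1n n_def nth_eq_iff_index_eq by metis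
    have "i \<noteq> j0" using i(1) n3 unfolding j0_def by auto
    then have neq0: "vs ! i \<noteq> vs ! j0" using vs(2) i(1) j0n n_def nth_eq_iff_index_eq by metis
    have "h (vs ! j1) \<noteq> h (vs ! i)"
    proof
      assume eq: "h (vs ! j1) = h (vs ! i)"
      obtain u where u: "u \<in> V - T" "{vs ! i, vs ! j1} = {u, p u}" using e1 unfolding F_def by blast
      then show False using pV[OF u(1)] eq neq1 by (auto simp: doubleton_eq_iff)
    qed
    then have "h (vs ! j1) < h (vs ! i)" using i(2)[OF j1n] by simp
    then have a1: "vs ! j1 = p (vs ! i)" using edge[of "vs ! j1" "vs ! i"] e1 by (simp add: insert_commute)
    have "h (vs ! j0) \<noteq> h (vs ! i)"
    proof
      assume eq: "h (vs ! j0) = h (vs ! i)"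
      obtain u where u: "u \<in> V - T" "{vs ! j0, vs ! i} = {u, p u}" using e0 unfolding F_def by blast
      then show False using pV[OF u(1)] eq neq0 by (auto simp: doubleton_eq_iff)
    qed
    then have "h (vs ! j0) < h (vs ! i)" using i(2)[OF j0n] by simp
    then have a0: "vs ! j0 = p (vs ! i)" using edge[of "vs ! j0" "vs ! i"] e0 by simp
    have "vs ! j1 = vs ! j0" using a0 a1 by simp
    then have "j1 = j0" using vs(2) j1n j0n n_def nth_eq_iff_index_eq by metis
    then show False using \<open>j1 \<noteq> j0\<close> by simp
  qed
  define P where "P = {(u, p u) | u. u \<in> V - T}"
  have PF: "P \<subseteq> uadj F" unfolding P_def uadj_def F_def by auto
  have DomP: "Domain P \<subseteq> V - T" unfolding P_def by auto
  have Pfun: "\<And>a b b'. (a,b) \<in> P \<Longrightarrow> (a,b') \<in> P \<Longrightarrow> b = b'" unfolding P_def by auto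
  have reach: "\<exists>t\<in>T. (w, t) \<in> P\<^sup>*" if "w \<in> V" for w
    using that
  proof (induction "h w" arbitrary: w rule: less_induct)
    case less
    show ?case
    proof (cases "w \<in> T")
      case True then show ?thesis by blast
    next
      case False
      then have "p w \<in> V" "h (p w) < h w" using pV less.prems by auto
      then obtain t where "t \<in> T" "(p w, t) \<in> P\<^sup>*" using less.hyps by blast
      moreover have "(w, p w) \<in> P" unfolding P_def using False less.prems by auto
      ultimately show ?thesis by (meson converse_rtrancl_into_rtrancl)
    qed
  qed
  have inv1: "(a,b) \<in> uadj F \<Longrightarrow> t \<in> T \<Longrightarrow> ((a,t) \<in> P\<^sup>* \<longleftrightarrow> (b,t) \<in> P\<^sup>*)" for a b t
  proof -
    assume ab: "(a,b) \<in> uadj F" and t: "t \<in> T"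
    then obtain u where u: "u \<in> V - T" "{a,b} = {u, p u}" unfolding uadj_def F_def by auto
    have uP: "(u, p u) \<in> P" using u(1) unfolding P_def by auto
    have key: "(u,t) \<in> P\<^sup>* \<longleftrightarrow> (p u, t) \<in> P\<^sup>*"
    proof
      assume "(u,t) \<in> P\<^sup>*"
      then show "(p u, t) \<in> P\<^sup>*"
      proof (cases rule: converse_rtranclE)
        case base then show ?thesis using u(1) t by auto
      next
        case (step c) then show ?thesis using Pfun uP by blast
      qed
    next
      assume "(p u, t) \<in> P\<^sup>*" then show "(u,t) \<in> P\<^sup>*" using uP by (meson converse_rtrancl_into_rtrancl)
    qed
    from u(2) have "a = u \<and> b = p u \<or> a = p u \<and> b = u" by (auto simp: doubleton_eq_iff)
    then show ?thesis using key by auto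
  qed
  have inv: "(a,b) \<in> (uadj F)\<^sup>* \<Longrightarrow> t \<in> T \<Longrightarrow> ((a,t) \<in> P\<^sup>* \<longleftrightarrow> (b,t) \<in> P\<^sup>*)" for a b t
  proof (induction rule: rtrancl_induct)
    case base then show ?case by simp
  next
    case (step b c) then show ?case using inv1 by blast
  qed
  have "\<exists>!t. t \<in> T \<and> (w, t) \<in> (uadj F)\<^sup>*" if wV: "w \<in> V" for w
  proof -
    obtain t where t: "t \<in> T" "(w,t) \<in> P\<^sup>*" using reach wV by blast
    have "(w,t) \<in> (uadj F)\<^sup>*" using rtrancl_mono[OF PF] t by blast
    moreover have "t' = t" if "t' \<in> T" "(w,t') \<in> (uadj F)\<^sup>*" for t'
    proof -
      have "(w,t') \<in> P\<^sup>*" using inv[OF that(2) that(1)] by simp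
      moreover have "t' \<notin> Domain P" "t \<notin> Domain P" using that(1) t(1) DomP by auto
      ultimately show ?thesis using func_unique[of P w t' t] Pfun t(2) by (auto simp: single_valued_def)
    qed
    ultimately show ?thesis using t(1) by blast
  qed
  then show ?thesis unfolding terminal_forest_def is_forest_def using FU nocyc by blast
qed

definition fcost :: "'a set \<Rightarrow> 'a set \<Rightarrow> ('a \<Rightarrow> 'a \<Rightarrow> real) \<Rightarrow> ('a \<times> 'a \<Rightarrow> real) \<Rightarrow> real" where
  "fcost V U w y = (\<Sum>t\<in>U. \<Sum>s\<in>V-{t}. w s t * y (s,t))"

definition cutok :: "'a set \<Rightarrow> 'a set \<Rightarrow> ('a \<times> 'a \<Rightarrow> real) \<Rightarrow> bool" where
  "cutok V T y \<longleftrightarrow> (\<forall>S. S \<subseteq> V - T \<longrightarrow> S \<noteq> {} \<longrightarrow> 1 \<le> (\<Sum>t\<in>S. \<Sum>s\<in>V-S. y (s,t)))"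

lemma merge_cut:
  assumes fin: "finite V" and T: "T \<subseteq> V" and b: "b \<in> V - T" and a: "a \<in> V" "a \<noteq> b"
    and cut: "cutok V T y"
  defines "y2 \<equiv> (\<lambda>(s,t). y (s,t) + (if s = a then y (b,t) else 0) + (if t = a then y (s,b) else 0))"
  shows "cutok (V - {b}) T y2"
  unfolding cutok_def
proof (intro allI impI)
  fix S assume S: "S \<subseteq> V - {b} - T" "S \<noteq> {}"
  have finS: "finite S" using S fin finite_subset by blast
  have inner: "(\<Sum>s\<in>V-{b}-S. y2 (s,t)) = (\<Sum>s\<in>V-{b}-S. y (s,t)) + (if a \<in> V-{b}-S then y (b,t) else 0)
      + (if t = a then (\<Sum>s\<in>V-{b}-S. y (s,b)) else 0)" if "t \<in> S" for t
  proof -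
    have "(\<Sum>s\<in>V-{b}-S. y2 (s,t)) = (\<Sum>s\<in>V-{b}-S. y (s,t)) + (\<Sum>s\<in>V-{b}-S. (if s = a then y (b,t) else 0))
      + (\<Sum>s\<in>V-{b}-S. (if t = a then y (s,b) else 0))"
      unfolding y2_def by (simp add: sum.distrib)
    also have "(\<Sum>s\<in>V-{b}-S. (if s = a then y (b,t) else 0)) = (if a \<in> V-{b}-S then y (b,t) else 0)"
      using fin by (simp add: sum.delta)
    also have "(\<Sum>s\<in>V-{b}-S. (if t = a then y (s,b) else 0)) = (if t = a then (\<Sum>s\<in>V-{b}-S. y (s,b)) else 0)"
      by simp
    finally show ?thesis .
  qed
  show "1 \<le> (\<Sum>t\<in>S. \<Sum>s\<in>V - {b} - S. y2 (s, t))"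
  proof (cases "a \<in> S")
    case False
    then have aV: "a \<in> V-{b}-S" using a by auto
    have "(\<Sum>s\<in>V-{b}-S. y2 (s,t)) = (\<Sum>s\<in>V-S. y (s,t))" if "t \<in> S" for t
    proof -
      have t: "t \<noteq> a" using that False by auto
      have "V - S = insert b (V-{b}-S)" using b S by auto
      then have "(\<Sum>s\<in>V-S. y (s,t)) = y (b,t) + (\<Sum>s\<in>V-{b}-S. y (s,t))" using fin by simp
      then show ?thesis using inner[OF that] aV t by simp
    qed
    then have "(\<Sum>t\<in>S. \<Sum>s\<in>V-{b}-S. y2 (s,t)) = (\<Sum>t\<in>S. \<Sum>s\<in>V-S. y (s,t))" by simp
    moreover have "1 \<le> (\<Sum>t\<in>S. \<Sum>s\<in>V-S. y (s,t))" using cut S unfolding cutok_def by auto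
    ultimately show ?thesis by simp
  next
    case True
    have bS: "b \<notin> S" using S by auto
    have "(\<Sum>t\<in>S. \<Sum>s\<in>V-{b}-S. y2 (s,t)) = (\<Sum>t\<in>S. (\<Sum>s\<in>V-{b}-S. y (s,t)) + (if t = a then (\<Sum>s\<in>V-{b}-S. y (s,b)) else 0))"
      using inner True by (intro sum.cong) auto
    also have "\<dots> = (\<Sum>t\<in>S. \<Sum>s\<in>V-{b}-S. y (s,t)) + (\<Sum>s\<in>V-{b}-S. y (s,b))"
      using True finS by (simp add: sum.distrib sum.delta)
    also have "\<dots> = (\<Sum>t\<in>insert b S. \<Sum>s\<in>V-insert b S. y (s,t))"
      using finS bS by (simp add: set_diff_eq Diff_insert add.commute)
    finally have eq: "(\<Sum>t\<in>S. \<Sum>s\<in>V-{b}-S. y2 (s,t)) = (\<Sum>t\<in>insert b S. \<Sum>s\<in>V-insert b S. y (s,t))" .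
    have "insert b S \<subseteq> V - T" using S b by auto
    then have "1 \<le> (\<Sum>t\<in>insert b S. \<Sum>s\<in>V-insert b S. y (s,t))" using cut unfolding cutok_def by blast
    then show ?thesis using eq by simp
  qed
qed

lemma merge_cost:
  assumes fin: "finite V" and T: "T \<subseteq> V" and b: "b \<in> V - T" and a: "a \<in> V" "a \<noteq> b"
    and ypos: "\<forall>e. 0 \<le> y e"
    and wpos: "\<forall>s\<in>V. \<forall>t\<in>V. s \<noteq> t \<longrightarrow> 0 \<le> w s t"
  defines "y2 \<equiv> (\<lambda>(s,t). y (s,t) + (if s = a then y (b,t) else 0) + (if t = a then y (s,b) else 0))"
    and "w2 \<equiv> (\<lambda>s t. if s = a then min (w a t) (w b t) else if t = a then min (w s a) (w s b) else w s t)"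
  shows "fcost (V - {b}) (V - T - {b}) w2 y2 \<le> fcost V (V - T) w y"
proof -
  define V2 where "V2 = V - {b}"
  define U2 where "U2 = V - T - {b}"
  have finV2: "finite V2" using fin V2_def by auto
  have finU2: "finite U2" using fin U2_def by auto
  have trm: "w2 s t * y2 (s,t) \<le> w s t * y (s,t) + (if s = a then w b t * y (b,t) else 0)
      + (if t = a then w s b * y (s,b) else 0)" if "s \<noteq> t" for s t
  proof -
    have y2e: "y2 (s,t) = y (s,t) + (if s = a then y (b,t) else 0) + (if t = a then y (s,b) else 0)"
      unfolding y2_def by simp
    have A: "w2 s t * y (s,t) \<le> w s t * y (s,t)"
      using ypos by (intro mult_right_mono) (auto simp: w2_def)
    have B: "w2 s t * (if s = a then y (b,t) else 0) \<le> (if s = a then w b t * y (b,t) else 0)"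
      using ypos that by (auto simp: w2_def intro!: mult_right_mono)
    have C: "w2 s t * (if t = a then y (s,b) else 0) \<le> (if t = a then w s b * y (s,b) else 0)"
      using ypos that by (auto simp: w2_def intro!: mult_right_mono)
    show ?thesis unfolding y2e distrib_left using A B C by linarith
  qed
  have pert: "(\<Sum>s\<in>V2-{t}. w2 s t * y2 (s,t)) \<le> (\<Sum>s\<in>V-{t}. w s t * y (s,t))
       + (if t = a then (\<Sum>s\<in>V2-{a}. w s b * y (s,b)) else 0)" if t: "t \<in> U2" for t
  proof -
    have "(\<Sum>s\<in>V2-{t}. w2 s t * y2 (s,t)) \<le> (\<Sum>s\<in>V2-{t}. w s t * y (s,t) + (if s = a then w b t * y (b,t) else 0)
      + (if t = a then w s b * y (s,b) else 0))"
      using trm by (intro sum_mono) auto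
    also have "\<dots> = (\<Sum>s\<in>V2-{t}. w s t * y (s,t)) + (if a \<in> V2-{t} then w b t * y (b,t) else 0)
      + (if t = a then (\<Sum>s\<in>V2-{t}. w s b * y (s,b)) else 0)"
      using finV2 by (simp add: sum.distrib sum.delta)
    also have "\<dots> \<le> (\<Sum>s\<in>V2-{t}. w s t * y (s,t)) + w b t * y (b,t)
      + (if t = a then (\<Sum>s\<in>V2-{a}. w s b * y (s,b)) else 0)"
    proof -
      have "0 \<le> w b t * y (b,t)" using wpos ypos b t U2_def by auto
      then show ?thesis by auto
    qed
    also have "(\<Sum>s\<in>V2-{t}. w s t * y (s,t)) + w b t * y (b,t) = (\<Sum>s\<in>V-{t}. w s t * y (s,t))"
    proof -
      have "V - {t} = insert b (V2 - {t})" using b t U2_def V2_def by auto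
      moreover have "b \<notin> V2 - {t}" using V2_def by auto
      ultimately show ?thesis using finV2 by simp
    qed
    finally show ?thesis by simp
  qed
  have "fcost V2 U2 w2 y2 \<le> (\<Sum>t\<in>U2. (\<Sum>s\<in>V-{t}. w s t * y (s,t))
       + (if t = a then (\<Sum>s\<in>V2-{a}. w s b * y (s,b)) else 0))"
    unfolding fcost_def using pert by (intro sum_mono) auto
  also have "\<dots> = (\<Sum>t\<in>U2. \<Sum>s\<in>V-{t}. w s t * y (s,t)) + (if a \<in> U2 then (\<Sum>s\<in>V2-{a}. w s b * y (s,b)) else 0)"
    using finU2 by (simp add: sum.distrib sum.delta)
  also have "\<dots> \<le> (\<Sum>t\<in>U2. \<Sum>s\<in>V-{t}. w s t * y (s,t)) + (\<Sum>s\<in>V-{b}. w s b * y (s,b))"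
  proof -
    have "(\<Sum>s\<in>V2-{a}. w s b * y (s,b)) \<le> (\<Sum>s\<in>V-{b}. w s b * y (s,b))"
      using fin wpos ypos b unfolding V2_def by (intro sum_mono2) auto
    moreover have "0 \<le> (\<Sum>s\<in>V-{b}. w s b * y (s,b))"
      using wpos ypos b by (intro sum_nonneg) auto
    ultimately show ?thesis by auto
  qed
  also have "\<dots> = fcost V (V - T) w y"
  proof -
    have "V - T = insert b U2" "b \<notin> U2" using b U2_def by auto
    then show ?thesis unfolding fcost_def using finU2 by (simp add: add.commute)
  qed
  finally show ?thesis unfolding V2_def U2_def .
qed

lemma merge_lift:
  assumes fin: "finite V" and T: "T \<subseteq> V" and b: "b \<in> V - T" and a: "a \<in> V" "a \<noteq> b"
    and wsym: "\<forall>s\<in>V. \<forall>t\<in>V. s \<noteq> t \<longrightarrow> w s t = w t s"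
    and w0: "w a b = 0"
    and pf2: "parf (V - {b}) T p2 h2"
  defines "w2 \<equiv> (\<lambda>s t. if s = a then min (w a t) (w b t) else if t = a then min (w s a) (w s b) else w s t)"
  shows "\<exists>p h. parf V T p h \<and> (\<Sum>u\<in>V-T. w u (p u)) = (\<Sum>u\<in>V-{b}-T. w2 u (p2 u))"
proof -
  define x where "x = p2 a"
  define cnd where "cnd = (a \<in> T \<or> w a x \<le> w b x)"
  define p where "p = (\<lambda>u. if u = b then (if a \<in> T then a else if w a x \<le> w b x then a else x)
       else if u = a then (if w a x \<le> w b x then x else b)
       else if p2 u = a then (if w u a \<le> w u b then a else b) else p2 u)"
  define h where "h = (\<lambda>u. if u \<in> T then 0 else if u = b \<or> u = a then
        2 * h2 a + (if (u = b) = cnd then 1 else 0) else 2 * h2 u)"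
  have P2: "\<And>u. u \<in> V - {b} - T \<Longrightarrow> p2 u \<in> V - {b} \<and> h2 (p2 u) < h2 u"
    and H2: "\<And>t. t \<in> T \<Longrightarrow> h2 t = 0" using pf2 unfolding parf_def by auto
  have hle: "h v \<le> 2 * h2 v" if "v \<in> V - {b}" "v \<noteq> a" for v using that unfolding h_def by auto
  have hab: "h v \<le> 2 * h2 a + 1" if "v = a \<or> v = b" for v
    using that H2 unfolding h_def by auto
  have hT: "\<forall>t\<in>T. h t = 0" unfolding h_def by simp
  have pfA: "\<forall>u\<in>V - T. p u \<in> V \<and> h (p u) < h u"
  proof
    fix u assume u: "u \<in> V - T"
    show "p u \<in> V \<and> h (p u) < h u"
    proof (cases "u = b")
      case True
      show ?thesis
      proof (cases "a \<in> T")
        case True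
        then show ?thesis using \<open>u = b\<close> a b H2 unfolding p_def h_def cnd_def by auto
      next
        case aU: False
        have xa: "x \<in> V - {b}" "h2 x < h2 a" using P2[of a] a aU unfolding x_def by auto
        have "h x < 2 * h2 a" using xa hle[of x] H2 unfolding h_def by auto
        then show ?thesis using \<open>u = b\<close> a b aU xa unfolding p_def h_def cnd_def by auto
      qed
    next
      case ub: False
      show ?thesis
      proof (cases "u = a")
        case True
        then have aU: "a \<notin> T" using u by auto
        have xa: "x \<in> V - {b}" "h2 x < h2 a" using P2[of a] a aU unfolding x_def by auto
        have "h x < 2 * h2 a" using xa hle[of x] H2 unfolding h_def by auto
        then show ?thesis using True a b aU xa ub unfolding p_def h_def cnd_def by auto
      next
        case ua: False
        have pu: "p2 u \<in> V - {b}" "h2 (p2 u) < h2 u" using P2[of u] u ub by auto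
        have hu: "h u = 2 * h2 u" using u ub ua unfolding h_def by auto
        show ?thesis
        proof (cases "p2 u = a")
          case True
          have pab: "p u = a \<or> p u = b" using ub ua True unfolding p_def by auto
          have "h (p u) < h u" using hab[of "p u"] pab hu pu True by auto
          then show ?thesis using a b pab by auto
        next
          case False
          have "p u = p2 u" using ub ua False unfolding p_def by auto
          moreover have "h (p2 u) < h u" using hle[of "p2 u"] pu False hu by auto
          ultimately show ?thesis using pu by auto
        qed
      qed
    qed
  qed
  have pfok: "parf V T p h" unfolding parf_def using pfA hT by blast
  have finU: "finite (V - {b} - T)" using fin by auto
  have other: "w u (p u) = w2 u (p2 u)" if u: "u \<in> V - T" "u \<noteq> a" "u \<noteq> b" for u
  proof -
    have pu: "p2 u \<in> V - {b}" using P2[of u] u by auto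
    show ?thesis
    proof (cases "p2 u = a")
      case True then show ?thesis using u unfolding p_def w2_def by (auto simp: min_def)
    next
      case False then show ?thesis using u unfolding p_def w2_def by auto
    qed
  qed
  have wba: "w b a = 0" using wsym w0 a b by auto
  have eqsum: "(\<Sum>u\<in>V-T. w u (p u)) = (\<Sum>u\<in>V-{b}-T. w2 u (p2 u))"
  proof (cases "a \<in> T")
    case True
    have "V - T = insert b (V - {b} - T)" using b by auto
    then have "(\<Sum>u\<in>V-T. w u (p u)) = w b (p b) + (\<Sum>u\<in>V-{b}-T. w u (p u))" using finU by simp
    also have "w b (p b) = 0" using True wba unfolding p_def by simp
    also have "(\<Sum>u\<in>V-{b}-T. w u (p u)) = (\<Sum>u\<in>V-{b}-T. w2 u (p2 u))"
      using other True by (intro sum.cong) auto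
    finally show ?thesis by simp
  next
    case False
    define W where "W = V - T - {a, b}"
    have finW: "finite W" using fin W_def by auto
    have e1: "V - T = insert b (insert a W)" "b \<notin> insert a W" "a \<notin> W" using b a False W_def by auto
    have e2: "V - {b} - T = insert a W" using b a False W_def by auto
    have "(\<Sum>u\<in>V-T. w u (p u)) = w b (p b) + w a (p a) + (\<Sum>u\<in>W. w u (p u))"
      using e1 finW by (simp add: add.assoc)
    also have "(\<Sum>u\<in>W. w u (p u)) = (\<Sum>u\<in>W. w2 u (p2 u))"
      using other unfolding W_def by (intro sum.cong) auto
    also have "w b (p b) + w a (p a) = w2 a (p2 a)"
    proof -
      have xV: "x \<in> V" "x \<noteq> a" using P2[of a] a False b unfolding x_def by auto
      show ?thesis
      proof (cases "w a x \<le> w b x")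
        case True
        then show ?thesis using False wba a b xV unfolding p_def w2_def x_def[symmetric] by (auto simp: min_def)
      next
        case nle: False
        then show ?thesis using False w0 a b xV unfolding p_def w2_def x_def[symmetric] by (auto simp: min_def)
      qed
    qed
    finally show ?thesis using e2 e1 finW by simp
  qed
  show ?thesis using pfok eqsum by blast
qed

lemma key_induct:
  "\<forall>V (w::'a \<Rightarrow> 'a \<Rightarrow> real) (y::'a \<times> 'a \<Rightarrow> real). finite V \<longrightarrow> T \<subseteq> V \<longrightarrow> card (V - T) = n \<longrightarrow>
     (\<forall>s\<in>V. \<forall>t\<in>V. s \<noteq> t \<longrightarrow> w s t = w t s \<and> 0 \<le> w s t) \<longrightarrow>
     (\<forall>e. 0 \<le> y e) \<longrightarrow> cutok V T y \<longrightarrow>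
     (\<exists>p h. parf V T p h \<and> (\<Sum>u\<in>V-T. w u (p u)) \<le> fcost V (V-T) w y)"
proof (induction n)
  case 0
  show ?case
  proof (intro allI impI)
    fix V :: "'a set" and w :: "'a \<Rightarrow> 'a \<Rightarrow> real" and y :: "'a \<times> 'a \<Rightarrow> real"
    assume fin: "finite V" and "T \<subseteq> V" and c: "card (V - T) = 0"
    then have "V - T = {}" by simp
    then have "parf V T id (\<lambda>_. 0)" unfolding parf_def by auto
    moreover have "fcost V (V - T) w y = 0" using \<open>V - T = {}\<close> unfolding fcost_def by (simp only: sum.empty)
    moreover have "(\<Sum>u\<in>V-T. w u (id u)) = 0" using \<open>V - T = {}\<close> by (simp only: sum.empty)
    ultimately have "parf V T id (\<lambda>_. 0) \<and> (\<Sum>u\<in>V-T. w u (id u)) \<le> fcost V (V-T) w y" by simp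
    then show "\<exists>p h. parf V T p h \<and> (\<Sum>u\<in>V-T. w u (p u)) \<le> fcost V (V-T) w y" by blast
  qed
next
  case (Suc n)
  show ?case
  proof (intro allI impI)
    fix V :: "'a set" and w :: "'a \<Rightarrow> 'a \<Rightarrow> real" and y :: "'a \<times> 'a \<Rightarrow> real"
    assume fin: "finite V" and T: "T \<subseteq> V" and c: "card (V - T) = Suc n"
      and wprop: "\<forall>s\<in>V. \<forall>t\<in>V. s \<noteq> t \<longrightarrow> w s t = w t s \<and> 0 \<le> w s t"
      and ypos: "\<forall>e. 0 \<le> y e" and cut: "cutok V T y"
    define U where "U = V - T"
    have Une: "U \<noteq> {}" using c U_def by (metis card.empty nat.distinct(1))
    have finU: "finite U" using fin U_def by auto
    have cutU: "1 \<le> (\<Sum>t\<in>U. \<Sum>s\<in>V-U. y (s,t))" using cut Une unfolding cutok_def U_def by auto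
    then have "V - U \<noteq> {}" by (metis (no_types, lifting) not_one_le_zero sum.empty sum.neutral)
    then obtain s0 where s0: "s0 \<in> V" "s0 \<notin> U" by auto
    obtain t0 where t0: "t0 \<in> U" using Une by auto
    define E where "E = {(s,t). s \<in> V \<and> t \<in> U \<and> s \<noteq> t}"
    have "E \<subseteq> V \<times> V" unfolding E_def U_def by auto
    then have finE: "finite E" using fin finite_subset by blast
    have Ene: "E \<noteq> {}" using s0 t0 U_def unfolding E_def by auto
    define lam where "lam = Min ((\<lambda>(s,t). w s t) ` E)"
    have "lam \<in> (\<lambda>(s,t). w s t) ` E" unfolding lam_def using finE Ene by (intro Min_in) auto
    then obtain a b where ab: "(a,b) \<in> E" "w a b = lam" by auto
    have lamle: "lam \<le> w s t" if "(s,t) \<in> E" for s t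
      unfolding lam_def using finE that by (intro Min_le) force+
    have a: "a \<in> V" "a \<noteq> b" and b: "b \<in> V - T" using ab unfolding E_def U_def by auto
    have lam0: "0 \<le> lam" using ab wprop a b by auto
    define w1 where "w1 = (\<lambda>s t. if s \<in> U \<or> t \<in> U then w s t - lam else w s t)"
    have w1prop: "\<forall>s\<in>V. \<forall>t\<in>V. s \<noteq> t \<longrightarrow> w1 s t = w1 t s \<and> 0 \<le> w1 s t"
    proof (intro ballI impI)
      fix s t assume st: "s \<in> V" "t \<in> V" "s \<noteq> t"
      have "w s t = w t s" using wprop st by auto
      moreover have "s \<in> U \<or> t \<in> U \<Longrightarrow> lam \<le> w s t"
        using lamle[of s t] lamle[of t s] st \<open>w s t = w t s\<close> unfolding E_def by auto
      ultimately show "w1 s t = w1 t s \<and> 0 \<le> w1 s t" using wprop st unfolding w1_def by auto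
    qed
    have w1ab: "w1 a b = 0" using ab b unfolding w1_def U_def by auto
    define y2 where "y2 \<equiv> (\<lambda>(s,t). y (s,t) + (if s = a then y (b,t) else 0) + (if t = a then y (s,b) else 0))"
    define w2 where "w2 \<equiv> (\<lambda>s t. if s = a then min (w1 a t) (w1 b t) else if t = a then min (w1 s a) (w1 s b) else w1 s t)"
    have cut2: "cutok (V - {b}) T y2" using merge_cut[OF fin T b a cut] unfolding y2_def by simp
    have cost2: "fcost (V - {b}) (V - T - {b}) w2 y2 \<le> fcost V (V - T) w1 y"
      using merge_cost[OF fin T b a ypos] w1prop unfolding y2_def w2_def by auto
    have w2prop: "\<forall>s\<in>V-{b}. \<forall>t\<in>V-{b}. s \<noteq> t \<longrightarrow> w2 s t = w2 t s \<and> 0 \<le> w2 s t"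
      using w1prop a b unfolding w2_def by auto
    have y2pos: "\<forall>e. 0 \<le> y2 e" using ypos unfolding y2_def by auto
    have card2: "card (V - {b} - T) = n"
    proof -
      have "V - {b} - T = (V - T) - {b}" by auto
      then show ?thesis using c b by (simp add: card_Diff_singleton)
    qed
    have T2: "T \<subseteq> V - {b}" using T b by auto
    obtain p2 h2 where ph2: "parf (V - {b}) T p2 h2"
        "(\<Sum>u\<in>V-{b}-T. w2 u (p2 u)) \<le> fcost (V-{b}) (V-{b}-T) w2 y2"
      using Suc.IH[THEN spec[of _ "V-{b}"], THEN spec[of _ w2], THEN spec[of _ y2]] fin T2 card2 w2prop y2pos cut2
      by auto
    have w1sym: "\<forall>s\<in>V. \<forall>t\<in>V. s \<noteq> t \<longrightarrow> w1 s t = w1 t s" using w1prop by auto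
    obtain p h where ph: "parf V T p h" "(\<Sum>u\<in>V-T. w1 u (p u)) = (\<Sum>u\<in>V-{b}-T. w2 u (p2 u))"
      using merge_lift[OF fin T b a w1sym w1ab ph2(1)] unfolding w2_def by blast
    have "V - {b} - T = V - T - {b}" by auto
    then have le1: "(\<Sum>u\<in>V-T. w1 u (p u)) \<le> fcost V (V - T) w1 y" using ph(2) ph2(2) cost2 by simp
    have s1: "(\<Sum>u\<in>V-T. w u (p u)) = (\<Sum>u\<in>V-T. w1 u (p u)) + lam * card U"
    proof -
      have "(\<Sum>u\<in>V-T. w1 u (p u)) = (\<Sum>u\<in>V-T. w u (p u) - lam)"
        unfolding w1_def U_def by (intro sum.cong) auto
      also have "\<dots> = (\<Sum>u\<in>V-T. w u (p u)) - lam * card U"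
        unfolding U_def by (simp add: sum_subtractf)
      finally show ?thesis by simp
    qed
    have s2: "fcost V (V - T) w y = fcost V (V - T) w1 y + lam * (\<Sum>t\<in>U. \<Sum>s\<in>V-{t}. y (s,t))"
    proof -
      have "fcost V (V - T) w1 y = (\<Sum>t\<in>U. \<Sum>s\<in>V-{t}. w s t * y (s,t) - lam * y (s,t))"
        unfolding fcost_def U_def by (intro sum.cong refl) (auto simp: w1_def U_def left_diff_distrib)
      also have "\<dots> = fcost V (V - T) w y - lam * (\<Sum>t\<in>U. \<Sum>s\<in>V-{t}. y (s,t))"
        unfolding fcost_def U_def by (simp add: sum_subtractf sum_distrib_left)
      finally show ?thesis by simp
    qed
    have "real (card U) \<le> (\<Sum>t\<in>U. \<Sum>s\<in>V-{t}. y (s,t))"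
    proof -
      have "1 \<le> (\<Sum>s\<in>V-{t}. y (s,t))" if "t \<in> U" for t
      proof -
        have "{t} \<subseteq> V - T" using that U_def by auto
        then have "1 \<le> (\<Sum>t'\<in>{t}. \<Sum>s\<in>V-{t}. y (s,t'))" using cut unfolding cutok_def by blast
        then show ?thesis by simp
      qed
      then have "(\<Sum>t\<in>U. (1::real)) \<le> (\<Sum>t\<in>U. \<Sum>s\<in>V-{t}. y (s,t))" by (intro sum_mono) auto
      then show ?thesis by simp
    qed
    then have "lam * card U \<le> lam * (\<Sum>t\<in>U. \<Sum>s\<in>V-{t}. y (s,t))" using lam0 by (intro mult_left_mono)
    then have "(\<Sum>u\<in>V-T. w u (p u)) \<le> fcost V (V-T) w y" using s1 s2 le1 by linarith
    then show "\<exists>p h. parf V T p h \<and> (\<Sum>u\<in>V-T. w u (p u)) \<le> fcost V (V-T) w y" using ph(1) by blast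
  qed
qed

lemma key:
  assumes "finite V" "T \<subseteq> V" "\<forall>s\<in>V. \<forall>t\<in>V. s \<noteq> t \<longrightarrow> w s t = w t s \<and> 0 \<le> w s t"
    "\<forall>e. 0 \<le> y e" "cutok V T y"
  shows "\<exists>p h. parf V T p h \<and> (\<Sum>u\<in>V-T. w u (p u)) \<le> fcost V (V-T) w y"
  using key_induct[of T "card (V - T)"] assms by blast

lemma ucost_eq:
  assumes "c a b = c b a" shows "ucost c {a, b} = c a b"
  unfolding ucost_def
proof (rule someI2[of _ "c a b"])
  show "\<exists>a' b'. {a, b} = {a', b'} \<and> c a b = c a' b'" by blast
next
  fix w assume "\<exists>a' b'. {a, b} = {a', b'} \<and> w = c a' b'"
  then obtain a' b' where "{a,b} = {a',b'}" "w = c a' b'" by blast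
  then show "w = c a b" using assms by (auto simp: doubleton_eq_iff)
qed

lemma min_forest_le:
  assumes fin: "finite V" and T: "T \<subseteq> V" and pf: "parf V T p h"
    and csym: "\<forall>s\<in>V. \<forall>t\<in>V. c s t = c t s"
  shows "min_tforest_cost V T c \<le> (\<Sum>u\<in>V-T. c u (p u))"
proof -
  define F where "F = (\<lambda>u. {u, p u}) ` (V - T)"
  have tf: "terminal_forest V T F" using parf_forest[OF fin T pf] unfolding F_def by simp
  have P: "\<And>u. u \<in> V - T \<Longrightarrow> p u \<in> V \<and> h (p u) < h u" using pf unfolding parf_def by auto
  have inj: "inj_on (\<lambda>u. {u, p u}) (V - T)"
  proof (rule inj_onI)
    fix u v assume u: "u \<in> V - T" and v: "v \<in> V - T" and eq: "{u, p u} = {v, p v}"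
    show "u = v"
    proof (rule ccontr)
      assume "u \<noteq> v"
      then have "u = p v" "v = p u" using eq by (auto simp: doubleton_eq_iff)
      then show False using P[OF u] P[OF v] by auto
    qed
  qed
  have "forest_cost c F = (\<Sum>u\<in>V-T. ucost c {u, p u})"
    unfolding forest_cost_def F_def using inj by (simp add: sum.reindex)
  also have "\<dots> = (\<Sum>u\<in>V-T. c u (p u))"
    using csym P by (intro sum.cong refl ucost_eq) auto
  finally have fc: "forest_cost c F = (\<Sum>u\<in>V-T. c u (p u))" .
  have "{F. terminal_forest V T F} \<subseteq> Pow (uedges V)"
    unfolding terminal_forest_def is_forest_def by auto
  moreover have "finite (uedges V)"
  proof -
    have "uedges V \<subseteq> Pow V" unfolding uedges_def by auto
    then show ?thesis using fin finite_subset by blast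
  qed
  ultimately have "finite {F. terminal_forest V T F}" by (meson finite_Pow_iff finite_subset)
  then have "min_tforest_cost V T c \<le> forest_cost c F"
    unfolding min_tforest_cost_def using tf by (intro Min_le) auto
  then show ?thesis using fc by simp
qed

lemma prob_lemma:
  fixes mu :: "'i \<Rightarrow> real"
  assumes "finite I"
  shows "(\<Sum>J\<in>Pow I. ((\<Prod>i\<in>J. mu i) * (\<Prod>i\<in>I - J. 1 - mu i)) * (if J \<inter> A = {} then 1 else 0))
         = (\<Prod>i\<in>I \<inter> A. 1 - mu i)"
  using assms
proof (induction I rule: finite_induct)
  case empty
  then show ?case by simp
next
  case (insert x F)
  define S where "S = (\<Sum>J\<in>Pow F. ((\<Prod>i\<in>J. mu i) * (\<Prod>i\<in>F - J. 1 - mu i)) * (if J \<inter> A = {} then 1 else 0))"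
  have disj: "Pow F \<inter> insert x ` Pow F = {}" using insert.hyps by auto
  have inj: "inj_on (insert x) (Pow F)" using insert.hyps unfolding inj_on_def
    by (metis Pow_iff insert_ident subset_iff)
  have finP: "finite (Pow F)" "finite (insert x ` Pow F)" using insert.hyps by auto
  have A1: "(\<Sum>J\<in>Pow F. ((\<Prod>i\<in>J. mu i) * (\<Prod>i\<in>insert x F - J. 1 - mu i)) * (if J \<inter> A = {} then 1 else 0))
      = (1 - mu x) * S"
  proof -
    have "((\<Prod>i\<in>J. mu i) * (\<Prod>i\<in>insert x F - J. 1 - mu i)) = (1 - mu x) * ((\<Prod>i\<in>J. mu i) * (\<Prod>i\<in>F - J. 1 - mu i))"
      if "J \<in> Pow F" for J
    proof -
      have "insert x F - J = insert x (F - J)" "x \<notin> F - J" using that insert.hyps by auto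
      then show ?thesis using insert.hyps by simp
    qed
    then show ?thesis unfolding S_def sum_distrib_left by (intro sum.cong) auto
  qed
  have A2: "(\<Sum>J\<in>insert x ` Pow F. ((\<Prod>i\<in>J. mu i) * (\<Prod>i\<in>insert x F - J. 1 - mu i)) * (if J \<inter> A = {} then 1 else 0))
      = (if x \<in> A then 0 else mu x * S)"
  proof -
    have "(\<Sum>J\<in>insert x ` Pow F. ((\<Prod>i\<in>J. mu i) * (\<Prod>i\<in>insert x F - J. 1 - mu i)) * (if J \<inter> A = {} then 1 else 0))
       = (\<Sum>J\<in>Pow F. ((\<Prod>i\<in>insert x J. mu i) * (\<Prod>i\<in>insert x F - insert x J. 1 - mu i)) * (if insert x J \<inter> A = {} then 1 else 0))"
      using inj by (simp add: sum.reindex)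
    also have "\<dots> = (\<Sum>J\<in>Pow F. (if x \<in> A then 0 else mu x) * (((\<Prod>i\<in>J. mu i) * (\<Prod>i\<in>F - J. 1 - mu i)) * (if J \<inter> A = {} then 1 else 0)))"
    proof (intro sum.cong refl)
      fix J assume J: "J \<in> Pow F"
      have "insert x F - insert x J = F - J" "x \<notin> J" "finite J" using J insert.hyps finite_subset by auto
      then show "((\<Prod>i\<in>insert x J. mu i) * (\<Prod>i\<in>insert x F - insert x J. 1 - mu i)) * (if insert x J \<inter> A = {} then 1 else 0)
        = (if x \<in> A then 0 else mu x) * (((\<Prod>i\<in>J. mu i) * (\<Prod>i\<in>F - J. 1 - mu i)) * (if J \<inter> A = {} then 1 else 0))"
        by auto
    qed
    also have "\<dots> = (if x \<in> A then 0 else mu x * S)" unfolding S_def sum_distrib_left[symmetric] by simp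
    finally show ?thesis .
  qed
  have "(\<Sum>J\<in>Pow (insert x F). ((\<Prod>i\<in>J. mu i) * (\<Prod>i\<in>insert x F - J. 1 - mu i)) * (if J \<inter> A = {} then 1 else 0))
     = (1 - mu x) * S + (if x \<in> A then 0 else mu x * S)"
    unfolding Pow_insert using A1 A2 disj finP by (simp add: sum.union_disjoint)
  also have "\<dots> = (\<Prod>i\<in>insert x F \<inter> A. 1 - mu i)"
  proof (cases "x \<in> A")
    case True
    then have "insert x F \<inter> A = insert x (F \<inter> A)" "x \<notin> F \<inter> A" using insert.hyps by auto
    then show ?thesis using True insert.IH insert.hyps S_def by simp
  next
    case False
    then have "insert x F \<inter> A = F \<inter> A" by auto
    then show ?thesis using False insert.IH S_def by (simp add: algebra_simps)
  qed
  finally show ?case .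
qed

lemma sum_delta_in:
  assumes "S \<subseteq> V" "finite V"
  shows "(\<Sum>e\<in>delta_in V S. f e) = (\<Sum>t\<in>S. \<Sum>s\<in>V-S. f (s,t))"
proof -
  have "delta_in V S = (V - S) \<times> S" using assms(1) unfolding delta_in_def dedges_def by auto
  then have "(\<Sum>e\<in>delta_in V S. f e) = (\<Sum>s\<in>V-S. \<Sum>t\<in>S. f (s,t))"
    by (simp add: sum.cartesian_product)
  also have "\<dots> = (\<Sum>t\<in>S. \<Sum>s\<in>V-S. f (s,t))" by (rule sum.swap)
  finally show ?thesis .
qed

lemma sum_dedges:
  assumes "finite V"
  shows "(\<Sum>e\<in>dedges V. f e) = (\<Sum>t\<in>V. \<Sum>s\<in>V-{t}. f (s,t))"
proof -
  have eq: "dedges V = (\<lambda>(t,s). (s,t)) ` (SIGMA t:V. V - {t})" unfolding dedges_def by auto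
  have inj: "inj_on (\<lambda>(t,s). (s,t)) (SIGMA t:V. V - {t})" by (auto simp: inj_on_def)
  have "(\<Sum>e\<in>dedges V. f e) = (\<Sum>(t,s)\<in>(SIGMA t:V. V - {t}). f (s,t))"
    unfolding eq using inj by (simp add: sum.reindex case_prod_beta')
  also have "\<dots> = (\<Sum>t\<in>V. \<Sum>s\<in>V-{t}. f (s,t))" using assms by (simp add: sum.Sigma)
  finally show ?thesis .
qed

lemma prod_exp_le:
  fixes m :: "'i \<Rightarrow> real"
  assumes "\<forall>i\<in>X. 0 \<le> m i \<and> m i \<le> 1"
  shows "(\<Prod>i\<in>X. 1 - m i) \<le> exp (- (\<Sum>i\<in>X. m i))"
proof -
  have "(\<Prod>i\<in>X. 1 - m i) \<le> (\<Prod>i\<in>X. exp (- m i))"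
  proof (rule prod_mono)
    fix i assume "i \<in> X"
    then show "0 \<le> 1 - m i \<and> 1 - m i \<le> exp (- m i)" using assms exp_ge_add_one_self[of "- m i"] by auto
  qed
  also have "\<dots> = exp (- (\<Sum>i\<in>X. m i))"
  proof (cases "finite X")
    case True then show ?thesis by (simp add: exp_sum sum_negf[symmetric])
  next
    case False then show ?thesis by simp
  qed
  finally show ?thesis .
qed

theorem lemma5:
  fixes C R :: "'a set" and c :: "'a \<Rightarrow> 'a \<Rightarrow> real" and k :: nat and \<gamma> :: real
    and x :: "'a \<Rightarrow> 'a \<Rightarrow> 'a \<times> 'a \<Rightarrow> real" and z :: "'a \<Rightarrow> 'a \<Rightarrow> 'a \<Rightarrow> real"
    and I :: "'i set" and rho sigma :: "'i \<Rightarrow> 'a" and B :: "'i \<Rightarrow> ('a \<times> 'a) set"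
    and mu :: "'i \<Rightarrow> real"
  assumes "finite C" and "finite R" and "C \<noteq> {}" and "R \<noteq> {}" and "C \<inter> R = {}"
    and "metric_on (C \<union> R) c"
    and "k \<ge> 3"
    and "\<forall>v\<in>C. Min (c v ` R) > 0"
    and "0 < \<gamma>" and "\<gamma> \<le> 1/2"
    and "lp_extreme C R c k x z" and "lp_optimal C R c k x z"
    and "finite I"
    and "\<forall>i\<in>I. rho i \<in> R \<and> sigma i \<in> C \<and> is_branching (C \<union> R) (rho i) (B i) \<and>
                mu i \<ge> 0 \<and> sigma i \<in> bverts (rho i) (B i)"
    and "\<forall>r\<in>R. \<forall>v\<in>C. (\<Sum>i\<in>{i\<in>I. rho i = r \<and> sigma i = v}. mu i) = 2 * \<gamma> * z r v v"
    and "\<forall>r\<in>R. \<forall>v\<in>C. \<forall>e\<in>dedges (C \<union> R).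
           (\<Sum>i\<in>{i\<in>I. rho i = r \<and> sigma i = v \<and> e \<in> B i}. mu i) \<le> \<gamma> * x r v e"
    and "\<forall>r\<in>R. \<forall>v\<in>C. \<forall>u\<in>C. u \<noteq> v \<longrightarrow>
           (\<Sum>i\<in>{i\<in>I. rho i = r \<and> sigma i = v \<and> u \<in> bverts (rho i) (B i)}. mu i) \<ge> \<gamma> * z r v u"
  shows "expected_forest_cost C R c I rho B mu \<le> exp (- \<gamma>) * lp_obj C R c x"
proof -
  note fC = assms(1) and fR = assms(2) and CR = assms(5) and met = assms(6)
    and g0 = assms(9) and g12 = assms(10) and opt = assms(12) and fI = assms(13)
    and Ih = assms(14) and grp = assms(15) and cov = assms(17)
  define V where "V = C \<union> R"
  have finV: "finite V" using fC fR V_def by auto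
  have feas: "lp_feasible C R c k x z" using opt unfolding lp_optimal_def by blast
  note F = feas[unfolded lp_feasible_def Let_def]
  have xpos: "\<forall>r v e. 0 \<le> x r v e" using F by (elim conjE) assumption
  have zpos: "\<forall>r v u. 0 \<le> z r v u" using F by (elim conjE) assumption
  have cut3: "\<forall>r\<in>R. \<forall>v\<in>C. \<forall>S u. S \<subseteq> C \<union> R - {r} \<and> u \<in> S \<longrightarrow> (\<Sum>e\<in>delta_in (C \<union> R) S. x r v e) \<ge> z r v u"
    using F by (elim conjE) assumption
  have sum4: "\<forall>u\<in>C. (\<Sum>r\<in>R. \<Sum>v\<in>C. z r v u) = 1"
    using F by (elim conjE) assumption
  have cprop: "\<forall>s\<in>V. \<forall>t\<in>V. s \<noteq> t \<longrightarrow> c s t = c t s \<and> 0 \<le> c s t"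
    using met unfolding metric_on_def V_def by auto
  have csym: "\<forall>s\<in>V. \<forall>t\<in>V. c s t = c t s"
    using met unfolding metric_on_def V_def by auto
  define y where "y = (\<lambda>e. \<Sum>r\<in>R. \<Sum>v\<in>C. x r v e)"
  have ypos: "\<forall>e. 0 \<le> y e" unfolding y_def using xpos by (auto intro!: sum_nonneg)
  define K where "K = (\<lambda>t. \<Sum>s\<in>V-{t}. c s t * y (s,t))"
  have Kpos: "0 \<le> K t" if "t \<in> V" for t
    unfolding K_def using cprop ypos that by (auto intro!: sum_nonneg mult_nonneg_nonneg)
  have obj: "lp_obj C R c x = (\<Sum>t\<in>V. K t)"
  proof -
    have "lp_obj C R c x = (\<Sum>r\<in>R. \<Sum>v\<in>C. \<Sum>e\<in>dedges V. c (fst e) (snd e) * x r v e)"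
      unfolding lp_obj_def V_def by simp
    also have "\<dots> = (\<Sum>r\<in>R. \<Sum>e\<in>dedges V. \<Sum>v\<in>C. c (fst e) (snd e) * x r v e)"
      by (intro sum.cong refl sum.swap)
    also have "\<dots> = (\<Sum>e\<in>dedges V. \<Sum>r\<in>R. \<Sum>v\<in>C. c (fst e) (snd e) * x r v e)"
      by (rule sum.swap)
    also have "\<dots> = (\<Sum>e\<in>dedges V. c (fst e) (snd e) * y e)"
      unfolding y_def by (simp add: sum_distrib_left)
    also have "\<dots> = (\<Sum>t\<in>V. K t)"
      unfolding K_def using finV by (simp add: sum_dedges)
    finally show ?thesis .
  qed
  define A where "A = (\<lambda>t. {i. t \<in> bverts (rho i) (B i)})"
  define P where "P = (\<lambda>J. (\<Prod>i\<in>J. mu i) * (\<Prod>i\<in>I - J. 1 - mu i))"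
  have zle1: "z r v v \<le> 1" if "r \<in> R" "v \<in> C" for r v
  proof -
    have "z r v v \<le> (\<Sum>v'\<in>C. z r v' v)" using that fC zpos by (intro member_le_sum) auto
    also have "\<dots> \<le> (\<Sum>r'\<in>R. \<Sum>v'\<in>C. z r' v' v)" using that fR zpos
      by (intro member_le_sum[where f = "\<lambda>r'. \<Sum>v'\<in>C. z r' v' v"]) (auto intro!: sum_nonneg)
    also have "\<dots> = 1" using sum4 that by auto
    finally show ?thesis .
  qed
  have mu01: "0 \<le> mu i \<and> mu i \<le> 1" if i: "i \<in> I" for i
  proof -
    have r: "rho i \<in> R" and v: "sigma i \<in> C" and m0: "0 \<le> mu i" using Ih i by auto
    have "mu i \<le> (\<Sum>j\<in>{j\<in>I. rho j = rho i \<and> sigma j = sigma i}. mu j)"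
      using i fI Ih by (intro member_le_sum) auto
    also have "\<dots> = 2 * \<gamma> * z (rho i) (sigma i) (sigma i)" using grp r v by auto
    also have "\<dots> \<le> z (rho i) (sigma i) (sigma i)"
    proof -
      have "0 \<le> z (rho i) (sigma i) (sigma i)" using zpos by auto
      moreover have "2 * \<gamma> \<le> 1" using g12 by simp
      ultimately show ?thesis by (metis mult_left_le_one_le mult_nonneg_nonneg g0 less_eq_real_def mult.commute zero_le_numeral)
    qed
    also have "\<dots> \<le> 1" using zle1 r v by auto
    finally show ?thesis using m0 by simp
  qed
  have Ppos: "0 \<le> P J" if "J \<in> Pow I" for J
    unfolding P_def using mu01 that by (auto intro!: mult_nonneg_nonneg prod_nonneg)
  have decomp: "(\<Sum>i\<in>X. mu i) = (\<Sum>r\<in>R. \<Sum>v\<in>C. \<Sum>i\<in>{i\<in>X. rho i = r \<and> sigma i = v}. mu i)"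
    if X: "X \<subseteq> I" for X
  proof -
    have finX: "finite X" using X fI finite_subset by blast
    have "(\<Sum>i\<in>X. mu i) = (\<Sum>i\<in>X. \<Sum>r\<in>R. \<Sum>v\<in>C. (if rho i = r \<and> sigma i = v then mu i else 0))"
    proof (intro sum.cong refl)
      fix i assume "i \<in> X"
      then have r: "rho i \<in> R" and v: "sigma i \<in> C" using Ih X by auto
      have "(\<Sum>r\<in>R. \<Sum>v\<in>C. (if rho i = r \<and> sigma i = v then mu i else 0))
          = (\<Sum>r\<in>R. if rho i = r then mu i else 0)"
        using fC v by (intro sum.cong refl) (auto simp: sum.delta)
      also have "\<dots> = mu i" using fR r by (simp add: sum.delta')
      finally show "mu i = (\<Sum>r\<in>R. \<Sum>v\<in>C. (if rho i = r \<and> sigma i = v then mu i else 0))" by simp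
    qed
    also have "\<dots> = (\<Sum>r\<in>R. \<Sum>i\<in>X. \<Sum>v\<in>C. (if rho i = r \<and> sigma i = v then mu i else 0))"
      by (rule sum.swap)
    also have "\<dots> = (\<Sum>r\<in>R. \<Sum>v\<in>C. \<Sum>i\<in>X. (if rho i = r \<and> sigma i = v then mu i else 0))"
      by (intro sum.cong refl sum.swap)
    also have "\<dots> = (\<Sum>r\<in>R. \<Sum>v\<in>C. \<Sum>i\<in>{i\<in>X. rho i = r \<and> sigma i = v}. mu i)"
      using finX by (simp add: sum.inter_filter)
    finally show ?thesis .
  qed
  have covsum: "\<gamma> \<le> (\<Sum>i\<in>I \<inter> A t. mu i)" if t: "t \<in> C" for t
  proof -
    have "(\<Sum>r\<in>R. \<Sum>v\<in>C. \<gamma> * z r v t) \<le> (\<Sum>r\<in>R. \<Sum>v\<in>C. \<Sum>i\<in>{i\<in>I \<inter> A t. rho i = r \<and> sigma i = v}. mu i)"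
    proof (intro sum_mono)
      fix r v assume r: "r \<in> R" and v: "v \<in> C"
      show "\<gamma> * z r v t \<le> (\<Sum>i\<in>{i\<in>I \<inter> A t. rho i = r \<and> sigma i = v}. mu i)"
      proof (cases "v = t")
        case True
        have "{i\<in>I \<inter> A t. rho i = r \<and> sigma i = v} = {i\<in>I. rho i = r \<and> sigma i = v}"
          using Ih True unfolding A_def by auto
        moreover have "\<gamma> * z r v t \<le> 2 * \<gamma> * z r v v" using True zpos g0
          by (simp add: mult_right_mono)
        ultimately show ?thesis using grp r v by auto
      next
        case False
        have "{i\<in>I \<inter> A t. rho i = r \<and> sigma i = v} = {i\<in>I. rho i = r \<and> sigma i = v \<and> t \<in> bverts (rho i) (B i)}"
          unfolding A_def by auto
        then show ?thesis using cov r v t False by auto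
      qed
    qed
    also have "\<dots> = (\<Sum>i\<in>I \<inter> A t. mu i)" using decomp[of "I \<inter> A t"] by auto
    finally have "(\<Sum>r\<in>R. \<Sum>v\<in>C. \<gamma> * z r v t) \<le> (\<Sum>i\<in>I \<inter> A t. mu i)" .
    moreover have "(\<Sum>r\<in>R. \<Sum>v\<in>C. \<gamma> * z r v t) = \<gamma>" using sum4 t by (simp add: sum_distrib_left[symmetric])
    ultimately show ?thesis by simp
  qed
  have unserved_iff: "t \<in> unserved C rho B J \<longleftrightarrow> t \<in> C \<and> J \<inter> A t = {}" for t J
    unfolding unserved_def A_def by auto
  have q: "(\<Sum>J\<in>Pow I. P J * (if t \<in> unserved C rho B J then 1 else 0)) \<le> exp (- \<gamma>)" for t
  proof (cases "t \<in> C")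
    case False
    then show ?thesis using unserved_iff by simp
  next
    case True
    have "(\<Sum>J\<in>Pow I. P J * (if t \<in> unserved C rho B J then 1 else 0))
        = (\<Sum>J\<in>Pow I. P J * (if J \<inter> A t = {} then 1 else 0))"
      using True unserved_iff by simp
    also have "\<dots> = (\<Prod>i\<in>I \<inter> A t. 1 - mu i)" unfolding P_def using prob_lemma[OF fI] by simp
    also have "\<dots> \<le> exp (- (\<Sum>i\<in>I \<inter> A t. mu i))" using mu01 by (intro prod_exp_le) auto
    also have "\<dots> \<le> exp (- \<gamma>)" using covsum[OF True] by simp
    finally show ?thesis .
  qed
  have MF: "min_tforest_cost V (R \<union> (C - unserved C rho B J)) c
      \<le> (\<Sum>t\<in>V. (if t \<in> unserved C rho B J then K t else 0))" for J
  proof -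
    define U where "U = unserved C rho B J"
    define T where "T = R \<union> (C - U)"
    have UC: "U \<subseteq> C" unfolding U_def unserved_def by auto
    have TV: "T \<subseteq> V" unfolding T_def V_def by auto
    have VT: "V - T = U" using UC CR unfolding T_def V_def by auto
    have cut: "cutok V T y"
      unfolding cutok_def
    proof (intro allI impI)
      fix S assume S: "S \<subseteq> V - T" "S \<noteq> {}"
      then obtain u where u: "u \<in> S" by auto
      have SC: "S \<subseteq> C" using S VT UC by auto
      have SV: "S \<subseteq> V" using SC V_def by auto
      have uC: "u \<in> C" using u SC by auto
      have "1 = (\<Sum>r\<in>R. \<Sum>v\<in>C. z r v u)" using sum4 uC by simp
      also have "\<dots> \<le> (\<Sum>r\<in>R. \<Sum>v\<in>C. \<Sum>e\<in>delta_in V S. x r v e)"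
      proof (intro sum_mono)
        fix r v assume r: "r \<in> R" and v: "v \<in> C"
        have "S \<subseteq> V - {r}" using SV SC r CR by auto
        then show "z r v u \<le> (\<Sum>e\<in>delta_in V S. x r v e)" using cut3 r v u unfolding V_def by blast
      qed
      also have "\<dots> = (\<Sum>e\<in>delta_in V S. y e)"
        unfolding y_def
        by (simp add: sum.swap[of _ R "delta_in V S"] sum.swap[of _ C "delta_in V S"])
      also have "\<dots> = (\<Sum>t\<in>S. \<Sum>s\<in>V-S. y (s,t))" using SV finV by (rule sum_delta_in)
      finally show "1 \<le> (\<Sum>t\<in>S. \<Sum>s\<in>V-S. y (s,t))" .
    qed
    obtain p h where ph: "parf V T p h" "(\<Sum>u\<in>V-T. c u (p u)) \<le> fcost V (V-T) c y"
      using key[OF finV TV cprop ypos cut] by blast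
    have "min_tforest_cost V T c \<le> (\<Sum>u\<in>V-T. c u (p u))"
      using min_forest_le[OF finV TV ph(1) csym] .
    also have "\<dots> \<le> fcost V (V-T) c y" by (rule ph(2))
    also have "\<dots> = (\<Sum>t\<in>U. K t)" unfolding fcost_def K_def VT ..
    also have "\<dots> = (\<Sum>t\<in>V. (if t \<in> U then K t else 0))"
    proof -
      have "U = V \<inter> U" using UC V_def by auto
      then show ?thesis using finV by (metis sum.inter_restrict)
    qed
    finally show ?thesis unfolding T_def U_def .
  qed
  have "expected_forest_cost C R c I rho B mu
      = (\<Sum>J\<in>Pow I. P J * min_tforest_cost V (R \<union> (C - unserved C rho B J)) c)"
    unfolding expected_forest_cost_def P_def V_def ..
  also have "\<dots> \<le> (\<Sum>J\<in>Pow I. P J * (\<Sum>t\<in>V. (if t \<in> unserved C rho B J then K t else 0)))"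
    using MF Ppos by (intro sum_mono mult_left_mono) auto
  also have "\<dots> = (\<Sum>J\<in>Pow I. \<Sum>t\<in>V. K t * (P J * (if t \<in> unserved C rho B J then 1 else 0)))"
    unfolding sum_distrib_left by (intro sum.cong refl) auto
  also have "\<dots> = (\<Sum>t\<in>V. \<Sum>J\<in>Pow I. K t * (P J * (if t \<in> unserved C rho B J then 1 else 0)))"
    by (rule sum.swap)
  also have "\<dots> = (\<Sum>t\<in>V. K t * (\<Sum>J\<in>Pow I. P J * (if t \<in> unserved C rho B J then 1 else 0)))"
    by (simp add: sum_distrib_left)
  also have "\<dots> \<le> (\<Sum>t\<in>V. K t * exp (- \<gamma>))"
    using q Kpos by (intro sum_mono mult_left_mono) auto
  also have "\<dots> = exp (- \<gamma>) * lp_obj C R c x"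
    unfolding obj by (simp add: sum_distrib_right mult.commute)
  finally show ?thesis .
qed


end
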